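(* Let $G$ be an abelian, second countable, locally compact group with Haar measure $\mu$. Let $\mathfrak{H}$ be a Hilbert space and $f:G\to\mathfrak{H}$ bounded with $g\mapsto\langle f(g),x\rangle$ Borel measurable for every $x\in\mathfrak{H}$, and assume $F:G\times G\to\mathbb{C}$, $F(g,h)=\langle f(g),f(h)\rangle$, is Borel measurable. Let $\Lambda_1,\Lambda_2\subset G$ be Borel sets with $\mu(\Lambda_j)<\infty$. Then \[ \left\|\int_{\Lambda_2}\int_{\Lambda_1}f(gh)\,dh\,dg\right\|^2\le\mu(\Lambda_2)\int_{\Lambda_1}\int_{\Lambda_1}\int_{\Lambda_2}\langle f(gh_1),f(gh_2)\rangle\,dg\,dh_1\,dh_2, \] and in particular these integrals exist.
   Context: Inner products are conjugate linear in the first slot. For measurable $\Lambda$ with $\mu(\Lambda)<\infty$, $\int_\Lambda f\,d\mu\in\mathfrak{H}$ is defined weakly by $\langle\int_\Lambda f\,d\mu,x\rangle=\int_\Lambda\langle f(y),x\rangle\,d\mu(y)$ for all $x\in\mathfrak{H}$; iterated integrals $\int_C\int_B\int_A\cdots$ are evaluated from the innermost outward. *)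

theory Defs
  imports "HOL-Analysis.Analysis" "HOL-Library.Complex_Order"
begin

class complex_vector = real_vector +
  fixes scaleC :: "complex \<Rightarrow> 'a \<Rightarrow> 'a" (infixr \<open>*\<^sub>C\<close> 75)
  assumes scaleC_add_right: "a *\<^sub>C (x + y) = a *\<^sub>C x + a *\<^sub>C y"
    and scaleC_add_left: "(a + b) *\<^sub>C x = a *\<^sub>C x + b *\<^sub>C x"
    and scaleC_scaleC: "a *\<^sub>C (b *\<^sub>C x) = (a * b) *\<^sub>C x"
    and scaleC_one: "1 *\<^sub>C x = x"
    and scaleR_scaleC: "scaleR r x = complex_of_real r *\<^sub>C x"

class complex_inner = complex_vector + real_normed_vector +
  fixes cinner :: "'a \<Rightarrow> 'a \<Rightarrow> complex"
  assumes cinner_commute: "cinner x y = cnj (cinner y x)"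
    and cinner_add_left: "cinner (x + y) z = cinner x z + cinner y z"
    and cinner_scaleC_left: "cinner (r *\<^sub>C x) y = cnj r * cinner x y"
    and cinner_ge_zero: "0 \<le> cinner x x"
    and cinner_eq_zero_iff: "cinner x x = 0 \<longleftrightarrow> x = 0"
    and norm_eq_sqrt_cinner: "norm x = sqrt (Re (cinner x x))"

text \<open>A complex Hilbert space is a complete complex inner product space:
  type class constraint \<open>{complex_inner, complete_space}\<close>.\<close>

definition locally_compact_type :: "'a::topological_space itself \<Rightarrow> bool" where
  "locally_compact_type _ \<longleftrightarrow>
     (\<forall>x::'a. \<exists>U K. open U \<and> compact K \<and> x \<in> U \<and> U \<subseteq> K)"

text \<open>Haar measure on an abelian (additively written) locally compact Hausdorff group:
  a nonzero translation invariant Radon measure on the Borel sets.\<close>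
definition haar_measure :: "'g::topological_ab_group_add measure \<Rightarrow> bool" where
  "haar_measure M \<longleftrightarrow>
     sets M = sets borel \<and>
     (\<forall>g A. A \<in> sets borel \<longrightarrow> emeasure M ((\<lambda>x. g + x) ` A) = emeasure M A) \<and>
     (\<forall>K. compact K \<longrightarrow> emeasure M K < \<infinity>) \<and>
     (\<forall>U. open U \<and> U \<noteq> {} \<longrightarrow> emeasure M U > 0) \<and>
     (\<forall>A \<in> sets borel. emeasure M A = (INF U \<in> {U. open U \<and> A \<subseteq> U}. emeasure M U)) \<and>
     (\<forall>U. open U \<longrightarrow> emeasure M U = (SUP K \<in> {K. compact K \<and> K \<subseteq> U}. emeasure M K))"

definition has_weak_integral ::
    "'a measure \<Rightarrow> 'a set \<Rightarrow> ('a \<Rightarrow> 'h::complex_inner) \<Rightarrow> 'h \<Rightarrow> bool" where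
  "has_weak_integral M A f v \<longleftrightarrow>
     (\<forall>x. set_integrable M A (\<lambda>y. cinner (f y) x) \<and>
          cinner v x = (LINT y:A|M. cinner (f y) x))"

definition weak_integrable :: "'a measure \<Rightarrow> 'a set \<Rightarrow> ('a \<Rightarrow> 'h::complex_inner) \<Rightarrow> bool" where
  "weak_integrable M A f \<longleftrightarrow> (\<exists>v. has_weak_integral M A f v)"

definition weak_integral :: "'a measure \<Rightarrow> 'a set \<Rightarrow> ('a \<Rightarrow> 'h::complex_inner) \<Rightarrow> 'h" where
  "weak_integral M A f = (THE v. has_weak_integral M A f v)"

end

theory Submission
  imports Defs
begin



lemma cinner_zero_left[simp]: "cinner 0 y = 0"
  using cinner_add_left[of 0 0 y] by simp

lemma cinner_zero_right[simp]: "cinner x 0 = 0"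
  using cinner_commute[of x 0] by simp

lemma cinner_add_right: "cinner x (y + z) = cinner x y + cinner x z"
  using cinner_commute[of x "y+z"] cinner_add_left[of y z x] cinner_commute[of y x] cinner_commute[of z x]
  by simp

lemma cinner_scaleC_right: "cinner x (r *\<^sub>C y) = r * cinner x y"
  using cinner_commute[of x "r *\<^sub>C y"] cinner_scaleC_left[of r y x] cinner_commute[of y x] by simp

lemma cinner_minus_left: "cinner (- x) y = - cinner x y"
proof -
  have "cinner x y + cinner (- x) y = 0" using cinner_add_left[of x "-x" y] by simp
  then show ?thesis by (rule minus_unique[symmetric])
qed

lemma cinner_minus_right: "cinner x (- y) = - cinner x y"
proof -
  have "cinner x y + cinner x (- y) = 0" using cinner_add_right[of x y "-y"] by simp
  then show ?thesis by (rule minus_unique[symmetric])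
qed

lemma cinner_diff_left: "cinner (x - y) z = cinner x z - cinner y z"
  using cinner_add_left[of x "-y" z] cinner_minus_left[of y z] by simp

lemma cinner_diff_right: "cinner x (y - z) = cinner x y - cinner x z"
  using cinner_add_right[of x y "-z"] cinner_minus_right[of x z] by simp

lemma cinner_scaleR_left: "cinner (r *\<^sub>R x) y = complex_of_real r * cinner x y"
  by (simp add: scaleR_scaleC cinner_scaleC_left)

lemma cinner_scaleR_right: "cinner x (r *\<^sub>R y) = complex_of_real r * cinner x y"
  by (simp add: scaleR_scaleC cinner_scaleC_right)

lemma cinner_self: "cinner x x = complex_of_real ((norm x)^2)"
proof -
  have "0 \<le> cinner x x" by (rule cinner_ge_zero)
  then have "Im (cinner x x) = 0" "0 \<le> Re (cinner x x)" by (auto simp: less_eq_complex_def)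
  then show ?thesis by (simp add: norm_eq_sqrt_cinner complex_eq_iff)
qed

lemma Re_cinner_self: "Re (cinner x x) = (norm x)^2"
  by (simp add: cinner_self)

lemma cauchy_schwarz_c: "norm (cinner x y) \<le> norm x * norm y"
proof (cases "y = 0")
  case True then show ?thesis by simp
next
  case False
  then have ny: "norm y > 0" by simp
  define t where "t = cinner y x / complex_of_real ((norm y)^2)"
  define z where "z = x - t *\<^sub>C y"
  have yz: "cinner y z = 0"
    using ny by (simp add: z_def t_def cinner_diff_right cinner_scaleC_right cinner_self)
  have zy: "cinner z y = 0" using yz cinner_commute[of z y] by simp
  have xz: "x = z + t *\<^sub>C y" by (simp add: z_def)
  have "cinner x x = cinner z z + (t * cnj t) * cinner y y"
    unfolding xz by (simp add: cinner_add_left cinner_add_right cinner_scaleC_left cinner_scaleC_right yz zy mult.commute)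
  then have "complex_of_real ((norm x)^2) = complex_of_real ((norm z)^2) + complex_of_real ((cmod t)^2) * complex_of_real ((norm y)^2)"
    by (simp only: cinner_self complex_norm_square[symmetric])
  then have "(norm x)^2 = (norm z)^2 + (cmod t)^2 * (norm y)^2"
    by (simp only: of_real_mult[symmetric] of_real_add[symmetric] of_real_eq_iff)
  then have "(cmod t)^2 * (norm y)^2 \<le> (norm x)^2" by simp
  moreover have "cmod t = norm (cinner y x) / (norm y)^2"
    by (simp add: t_def norm_divide norm_power)
  ultimately have le1: "(cmod t)^2 * (norm y)^2 \<le> (norm x)^2" and ct: "cmod t = norm (cinner y x) / (norm y)^2" by auto
  have "norm (cinner y x) = cmod t * (norm y)^2" using ny ct by simp
  then have "(norm (cinner y x))^2 = ((cmod t)^2 * (norm y)^2) * (norm y)^2"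
    by (simp add: power_mult_distrib power2_eq_square)
  also have "\<dots> \<le> (norm x)^2 * (norm y)^2"
    by (rule mult_right_mono[OF le1]) simp
  finally have "(norm (cinner y x))^2 \<le> (norm x * norm y)^2" by (simp add: power_mult_distrib)
  then have "norm (cinner y x) \<le> norm x * norm y"
    by (rule power2_le_imp_le) simp
  then show ?thesis using cinner_commute[of x y] by simp
qed





lemma Re_cinner_sym: "Re (cinner w u) = Re (cinner u w)"
  using cinner_commute[of w u] by simp

lemma norm_diff_scaleR_sq:
  "(norm (u - s *\<^sub>R w))^2 = (norm u)^2 - 2 * s * Re (cinner u w) + s^2 * (norm w)^2"
proof -
  have "cinner (u - s *\<^sub>R w) (u - s *\<^sub>R w) = cinner u u - of_real s * cinner u w - of_real s * cinner w u + of_real s * of_real s * cinner w w"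
    by (simp add: cinner_diff_left cinner_diff_right cinner_scaleR_left cinner_scaleR_right algebra_simps)
  then have "Re (cinner (u - s *\<^sub>R w) (u - s *\<^sub>R w)) = Re (cinner u u) - s * Re (cinner u w) - s * Re (cinner w u) + s * s * Re (cinner w w)"
    by simp
  then show ?thesis by (simp add: Re_cinner_self Re_cinner_sym power2_eq_square)
qed

lemma parallelogram:
  fixes a b :: "'a::complex_inner"
  shows   "(norm (a + b))^2 + (norm (a - b))^2 = 2 * (norm a)^2 + 2 * (norm b)^2"
proof -
  have h: "cinner (a + b) (a + b) + cinner (a - b) (a - b) = cinner a a + cinner a a + cinner b b + cinner b b"
    by (simp add: cinner_add_left cinner_add_right cinner_diff_left cinner_diff_right algebra_simps)
  have "Re (cinner (a + b) (a + b) + cinner (a - b) (a - b)) = Re (cinner a a + cinner a a + cinner b b + cinner b b)"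
    using h by (rule arg_cong)
  then have "Re (cinner (a + b) (a + b)) + Re (cinner (a - b) (a - b)) = Re (cinner a a) + Re (cinner a a) + Re (cinner b b) + Re (cinner b b)"
    by (simp only: plus_complex.sel)
  then show ?thesis by (simp only: Re_cinner_self)
qed

lemma aux_real_zero:
  fixes p q :: real
  assumes h: "\<And>s. 0 \<le> s * s * q - 2 * s * p" and q: "0 \<le> q" and p: "0 \<le> p"
  shows "p = 0"
proof (rule ccontr)
  assume "p \<noteq> 0"
  with p have pp: "p > 0" by simp
  define s where "s = p / (q + 2)"
  have s0: "s > 0" using pp q by (simp add: s_def)
  have "s * q \<le> p" using q pp by (simp add: s_def field_simps)
  then have "s * s * q \<le> s * p" using s0 by (metis mult.assoc mult_left_mono less_imp_le)
  then have "s * s * q - 2 * s * p \<le> - s * p" by linarith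
  also have "\<dots> < 0" using s0 pp by simp
  finally show False using h[of s] by simp
qed

lemma riesz_rep:
  fixes \<phi> :: "'h::{complex_inner, complete_space} \<Rightarrow> complex"
  assumes add: "\<And>x y. \<phi> (x + y) = \<phi> x + \<phi> y"
    and scal: "\<And>c x. \<phi> (c *\<^sub>C x) = c * \<phi> x"
    and bnd: "\<And>x. norm (\<phi> x) \<le> C * norm x"
  shows "\<exists>v. \<forall>x. \<phi> x = cinner v x"
proof (cases "\<forall>x. \<phi> x = 0")
  case True
  then show ?thesis by (intro exI[of _ 0]) simp
next
  case False
  have zero: "\<phi> 0 = 0" using add[of 0 0] by simp
  have diff: "\<phi> (x - y) = \<phi> x - \<phi> y" for x y
    using add[of "x - y" y] by (simp add: algebra_simps)
  have sR: "\<phi> (r *\<^sub>R x) = of_real r * \<phi> x" for r x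
    by (simp add: scaleR_scaleC scal)
  from False obtain z0 where z0: "\<phi> z0 \<noteq> 0" by auto
  define z where "z = (1 / \<phi> z0) *\<^sub>C z0"
  have z1: "\<phi> z = 1" using z0 by (simp add: z_def scal)
  define K where "K = {k. \<phi> k = 0}"
  define d where "d = Inf ((\<lambda>k. norm (z - k)) ` K)"
  have K0: "0 \<in> K" by (simp add: K_def zero)
  have bdd: "bdd_below ((\<lambda>k. norm (z - k)) ` K)" by (rule bdd_belowI[of _ 0]) auto
  have dle: "d \<le> norm (z - k)" if "k \<in> K" for k
    unfolding d_def by (rule cInf_lower) (use bdd that in auto)
  have d0: "0 \<le> d" using dle[OF K0] unfolding d_def
    by (metis K0 cINF_greatest empty_iff norm_ge_zero)
  have "\<exists>k\<in>K. norm (z - k) < d + 1 / (Suc n)" for n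
  proof -
    have "Inf ((\<lambda>k. norm (z - k)) ` K) < d + 1 / Suc n" unfolding d_def by simp
    then show ?thesis using K0 by (subst (asm) cInf_less_iff) (auto simp: bdd)
  qed
  then obtain ks where ksK: "\<And>n. ks n \<in> K" and ksd: "\<And>n. norm (z - ks n) < d + 1 / Suc n"
    by metis
  define e where "e n = (2 * d + 1) / Suc n" for n
  have sq_bound: "(norm (z - ks n))^2 \<le> d^2 + e n" for n
  proof -
    have a: "norm (z - ks n) \<le> d + 1 / Suc n" using ksd[of n] by simp
    have "(norm (z - ks n))^2 \<le> (d + 1 / Suc n)^2"
      using a by (intro power_mono) auto
    also have "\<dots> = d^2 + 2 * d / Suc n + 1 / Suc n * (1 / Suc n)"
      by (simp add: power2_eq_square algebra_simps)
    also have "1 / Suc n * (1 / Suc n) \<le> 1 / Suc n"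
      by (intro mult_left_le) auto
    then have "d^2 + 2 * d / Suc n + 1 / Suc n * (1 / Suc n) \<le> d^2 + e n"
      by (simp add: e_def add_divide_distrib)
    finally show ?thesis .
  qed
  have mid: "norm (ks m - ks n)^2 \<le> 2 * e m + 2 * e n" for m n
  proof -
    define a where "a = z - ks m"
    define b where "b = z - ks n"
    have midK: "(1/2) *\<^sub>R (ks m + ks n) \<in> K" using ksK[of m] ksK[of n]
      by (simp add: K_def sR add)
    have "a + b = 2 *\<^sub>R (z - (1/2) *\<^sub>R (ks m + ks n))"
      by (simp add: a_def b_def algebra_simps scaleR_2)
    then have "norm (a + b) = 2 * norm (z - (1/2) *\<^sub>R (ks m + ks n))" by simp
    then have "norm (a + b) \<ge> 2 * d" using dle[OF midK] by simp
    then have "(norm (a + b))^2 \<ge> (2 * d)^2" using d0 by (intro power_mono) auto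
    moreover have "a - b = ks n - ks m" by (simp add: a_def b_def)
    moreover have "norm (ks n - ks m) = norm (ks m - ks n)" by (rule norm_minus_commute)
    ultimately have "norm (ks m - ks n)^2 \<le> 2 * (norm a)^2 + 2 * (norm b)^2 - 4 * d^2"
      using parallelogram[of a b] by (simp add: power2_eq_square)
    then show ?thesis using sq_bound[of m] sq_bound[of n] by (simp add: a_def b_def)
  qed
  have "Cauchy ks"
  proof (rule metric_CauchyI)
    fix \<epsilon> :: real assume ep: "\<epsilon> > 0"
    obtain N :: nat where N: "4 * (2 * d + 1) / \<epsilon>^2 < N" using reals_Archimedean2 by blast
    have "\<forall>m\<ge>N. \<forall>n\<ge>N. dist (ks m) (ks n) < \<epsilon>"
    proof (intro allI impI)
      fix m n assume mN: "m \<ge> N" and nN: "n \<ge> N"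
      have eN: "e k \<le> (2 * d + 1) / Suc N" if "k \<ge> N" for k
        unfolding e_def using d0 that by (intro divide_left_mono) auto
      have "(2 * d + 1) / Suc N < \<epsilon>^2 / 4"
      proof -
        have e2: "0 < \<epsilon>^2" using ep by simp
        have h1: "4 * (2 * d + 1) < real N * \<epsilon>^2"
          using N unfolding pos_divide_less_eq[OF e2] .
        have h2: "real N * \<epsilon>^2 < real (Suc N) * \<epsilon>^2"
          using ep by (intro mult_strict_right_mono) auto
        have "4 * (2 * d + 1) < real (Suc N) * \<epsilon>^2" using h1 h2 by linarith
        then show ?thesis by (simp add: field_simps)
      qed
      then have "norm (ks m - ks n)^2 < \<epsilon>^2"
        using mid[of m n] eN[OF mN] eN[OF nN] by linarith
      then have "norm (ks m - ks n) < \<epsilon>"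
        using ep by (simp add: power_less_imp_less_base)
      then show "dist (ks m) (ks n) < \<epsilon>" by (simp add: dist_norm)
    qed
    then show "\<exists>N. \<forall>m\<ge>N. \<forall>n\<ge>N. dist (ks m) (ks n) < \<epsilon>" by blast
  qed
  then obtain k0 where lim: "ks \<longlonglongrightarrow> k0" using Cauchy_convergent[OF \<open>Cauchy ks\<close>] unfolding convergent_def by blast
  have "(\<lambda>n. \<phi> (ks n) - \<phi> k0) \<longlonglongrightarrow> 0"
  proof (rule tendsto_0_le[where K=C and f="\<lambda>n. ks n - k0"])
    show "(\<lambda>n. ks n - k0) \<longlonglongrightarrow> 0" using lim by (simp add: LIM_zero)
    show "\<forall>\<^sub>F n in sequentially. norm (\<phi> (ks n) - \<phi> k0) \<le> norm (ks n - k0) * C"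
      using bnd by (simp add: diff[symmetric] mult.commute)
  qed
  then have "(\<lambda>n. \<phi> (ks n)) \<longlonglongrightarrow> \<phi> k0" by (simp add: LIM_zero_iff)
  moreover have "(\<lambda>n. \<phi> (ks n)) = (\<lambda>n. 0)" using ksK by (simp add: K_def)
  ultimately have k0K: "\<phi> k0 = 0" using LIMSEQ_unique tendsto_const by metis
  have "(\<lambda>n. norm (z - ks n)) \<longlonglongrightarrow> norm (z - k0)"
    by (intro tendsto_intros lim)
  moreover have "(\<lambda>n. d + 1 / Suc n) \<longlonglongrightarrow> d + 0"
    by (intro tendsto_intros LIMSEQ_inverse_real_of_nat[simplified inverse_eq_divide])
  ultimately have nk0: "norm (z - k0) \<le> d"
    using ksd by (intro LIMSEQ_le) (auto intro: less_imp_le)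
  define u where "u = z - k0"
  have u1: "\<phi> u = 1" by (simp add: u_def diff z1 k0K)
  have umin: "norm u \<le> norm (u - k)" if "k \<in> K" for k
  proof -
    have "k0 + k \<in> K" using that k0K by (simp add: K_def add)
    then have "d \<le> norm (z - (k0 + k))" by (rule dle)
    then show ?thesis using nk0 by (simp add: u_def algebra_simps)
  qed
  have orth: "cinner u k = 0" if "k \<in> K" for k
  proof -
    define a where "a = cinner u k"
    define w where "w = cnj a *\<^sub>C k"
    have wK: "s *\<^sub>R w \<in> K" for s using that by (simp add: K_def w_def sR scal)
    have uw0: "cinner u w = cnj a * a"
      by (simp add: w_def cinner_scaleC_right a_def)
    have uw: "cinner u w = complex_of_real ((cmod a)^2)"
      unfolding uw0 by (subst complex_norm_square) (simp add: mult.commute)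
    have "0 \<le> s * s * (norm w)^2 - 2 * s * ((cmod a)^2)" for s
    proof -
      have "norm u \<le> norm (u - s *\<^sub>R w)" by (rule umin[OF wK])
      then have "(norm u)^2 \<le> (norm (u - s *\<^sub>R w))^2" by (intro power_mono) auto
      then show ?thesis unfolding norm_diff_scaleR_sq uw by (simp add: power2_eq_square)
    qed
    then have "(cmod a)^2 = 0" by (rule aux_real_zero) auto
    then show ?thesis by (simp add: a_def)
  qed
  have u0: "u \<noteq> 0" using u1 zero by auto
  define v where "v = (1 / (norm u)^2) *\<^sub>R u"
  have "\<phi> x = cinner v x" for x
  proof -
    have "x - \<phi> x *\<^sub>C u \<in> K" by (simp add: K_def diff scal u1)
    then have "cinner u (x - \<phi> x *\<^sub>C u) = 0" by (rule orth)
    then have "cinner u x = \<phi> x * cinner u u" by (simp add: cinner_diff_right cinner_scaleC_right)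
    then show ?thesis using u0 by (simp add: v_def cinner_scaleR_left cinner_self)
  qed
  then show ?thesis by blast
qed




definition rest :: "'a measure \<Rightarrow> 'a set \<Rightarrow> 'a measure" where
  "rest M A = density M (\<lambda>x. ennreal (indicator A x))"

lemma rest_sets[simp]: "sets (rest M A) = sets M"
  by (simp add: rest_def)

lemma rest_space[simp]: "space (rest M A) = space M"
  by (simp add: rest_def)

lemma rest_emeasure_space:
  assumes A: "A \<in> sets M"
  shows "emeasure (rest M A) (space M) = emeasure M A"
proof -
  have "emeasure (rest M A) (space M) = (\<integral>\<^sup>+x. ennreal (indicator A x) * indicator (space M) x \<partial>M)"
    unfolding rest_def by (rule emeasure_density) (use A in auto)
  also have "\<dots> = (\<integral>\<^sup>+x. indicator A x \<partial>M)"
    by (intro nn_integral_cong) (auto split: split_indicator)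
  also have "\<dots> = emeasure M A" using A by simp
  finally show ?thesis .
qed

lemma rest_finite:
  assumes "A \<in> sets M" "emeasure M A < \<infinity>"
  shows "finite_measure (rest M A)"
  by (rule finite_measureI) (use assms rest_emeasure_space[OF assms(1)] in auto)

lemma rest_measure:
  assumes "A \<in> sets M"
  shows "measure (rest M A) (space (rest M A)) = measure M A"
  using rest_emeasure_space[OF assms] by (simp add: measure_def)

lemma rest_integral:
  fixes u :: "'a \<Rightarrow> 'b::{banach, second_countable_topology}"
  assumes "A \<in> sets M" "u \<in> borel_measurable M"
  shows "(LINT x:A|M. u x) = integral\<^sup>L (rest M A) u"
  unfolding set_lebesgue_integral_def rest_def
  by (rule integral_density[symmetric]) (use assms in auto)

lemma rest_integrable:
  fixes u :: "'a \<Rightarrow> 'b::{banach, second_countable_topology}"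
  assumes "A \<in> sets M" "u \<in> borel_measurable M"
  shows "set_integrable M A u \<longleftrightarrow> integrable (rest M A) u"
  unfolding set_integrable_def rest_def
  by (rule integrable_density[symmetric]) (use assms in auto)

lemma fm_integrable:
  fixes u :: "'a \<Rightarrow> 'b::{banach, second_countable_topology}"
  assumes "finite_measure N" "u \<in> borel_measurable N" "\<And>x. norm (u x) \<le> B"
  shows "integrable N u"
  using assms by (intro finite_measure.integrable_const_bound[where B=B]) auto

lemma fm_bound:
  fixes u :: "'a \<Rightarrow> 'b::{banach, second_countable_topology}"
  assumes "finite_measure N" "u \<in> borel_measurable N" "\<And>x. norm (u x) \<le> B"
  shows "norm (integral\<^sup>L N u) \<le> B * measure N (space N)"
proof -
  have B0: "0 \<le> B" using assms(3)[of undefined] norm_ge_zero order_trans by blast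
  have "norm (integral\<^sup>L N u) \<le> (\<integral>x. norm (u x) \<partial>N)" by (rule integral_norm_bound)
  also have "\<dots> \<le> (\<integral>x. B \<partial>N)"
    using assms by (intro integral_mono fm_integrable[where B=B]) (auto intro: finite_measure.integrable_const B0)
  also have "\<dots> = B * measure N (space N)" by simp
  finally show ?thesis .
qed

lemma meas_int:
  fixes H :: "'a::second_countable_topology \<Rightarrow> 'b::second_countable_topology \<Rightarrow> complex"
  assumes N: "finite_measure N" "sets N = sets borel"
    and H: "(\<lambda>p. H (fst p) (snd p)) \<in> borel_measurable borel"
  shows "(\<lambda>x. integral\<^sup>L N (H x)) \<in> borel_measurable borel"
proof -
  interpret finite_measure N by fact
  have s: "sets (borel \<Otimes>\<^sub>M N) = sets (borel :: ('a \<times> 'b) measure)"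
    by (subst sets_pair_measure_cong[OF refl N(2)]) (subst borel_prod, rule refl)
  have "case_prod H \<in> borel_measurable (borel \<Otimes>\<^sub>M N)"
    using H unfolding measurable_cong_sets[OF s refl] by (simp add: case_prod_beta')
  then show ?thesis by (rule borel_measurable_lebesgue_integral)
qed

lemma fubini_bdd:
  fixes H :: "'a::second_countable_topology \<Rightarrow> 'b::second_countable_topology \<Rightarrow> complex"
  assumes M1: "finite_measure M1" "sets M1 = sets borel"
    and M2: "finite_measure M2" "sets M2 = sets borel"
    and H: "(\<lambda>p. H (fst p) (snd p)) \<in> borel_measurable borel"
    and bnd: "\<And>x y. norm (H x y) \<le> B"
  shows "(\<integral>y. (\<integral>x. H x y \<partial>M1) \<partial>M2) = (\<integral>x. (\<integral>y. H x y \<partial>M2) \<partial>M1)"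
proof -
  interpret A: finite_measure M1 by fact
  interpret B: finite_measure M2 by fact
  interpret pair_sigma_finite M1 M2 by unfold_locales
  have s: "sets (M1 \<Otimes>\<^sub>M M2) = sets (borel :: ('a \<times> 'b) measure)"
    by (subst sets_pair_measure_cong[OF M1(2) M2(2)]) (subst borel_prod, rule refl)
  have fin: "finite_measure (M1 \<Otimes>\<^sub>M M2)"
    by (rule finite_measure_pair_measure) fact+
  have m: "case_prod H \<in> borel_measurable (M1 \<Otimes>\<^sub>M M2)"
    using H unfolding measurable_cong_sets[OF s refl] by (simp add: case_prod_beta')
  have "integrable (M1 \<Otimes>\<^sub>M M2) (case_prod H)"
    by (rule fm_integrable[OF fin m, where B=B]) (auto simp: bnd)
  then show ?thesis by (rule Fubini_integral)
qed

lemma weak_integral_unique: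
  fixes u :: "'a \<Rightarrow> 'h::complex_inner"
  assumes "has_weak_integral M A u v" "has_weak_integral M A u v'"
  shows "v = v'"
proof -
  have "cinner (v - v') x = 0" for x
    using assms by (simp add: has_weak_integral_def cinner_diff_left)
  then have "cinner (v - v') (v - v') = 0" by blast
  then show ?thesis using cinner_eq_zero_iff[of "v - v'"] by simp
qed

lemma weak_integral_exists:
  fixes u :: "'a \<Rightarrow> 'h::{complex_inner, complete_space}"
  assumes A: "A \<in> sets M" "emeasure M A < \<infinity>"
    and meas: "\<And>x. (\<lambda>y. cinner (u y) x) \<in> borel_measurable M"
    and bnd: "\<And>y. norm (u y) \<le> B"
  shows "has_weak_integral M A u (weak_integral M A u)"
proof -
  define N where "N = rest M A"
  have fin: "finite_measure N" unfolding N_def using A by (rule rest_finite)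
  have mN: "(\<lambda>y. cinner (u y) x) \<in> borel_measurable N" for x
    unfolding N_def using meas[of x] by (simp add: measurable_cong_sets[OF rest_sets refl])
  have bd: "norm (cinner (u y) x) \<le> B * norm x" for x y
    using cauchy_schwarz_c[of "u y" x] bnd[of y]
    by (meson mult_right_mono norm_ge_zero order_trans)
  have intN: "integrable N (\<lambda>y. cinner (u y) x)" for x
    by (rule fm_integrable[OF fin mN bd])
  define \<phi> where "\<phi> x = integral\<^sup>L N (\<lambda>y. cinner (u y) x)" for x
  have "\<exists>v. \<forall>x. \<phi> x = cinner v x"
  proof (rule riesz_rep)
    show "\<phi> (x + y) = \<phi> x + \<phi> y" for x y
      unfolding \<phi>_def by (simp add: cinner_add_right intN)
    show "\<phi> (c *\<^sub>C x) = c * \<phi> x" for c x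
      unfolding \<phi>_def by (simp add: cinner_scaleC_right)
    show "norm (\<phi> x) \<le> (B * measure N (space N)) * norm x" for x
      unfolding \<phi>_def using fm_bound[OF fin mN bd, of x] by (simp add: algebra_simps)
  qed
  then obtain v where v: "\<And>x. \<phi> x = cinner v x" by blast
  have hv: "has_weak_integral M A u v"
    unfolding has_weak_integral_def
  proof (intro allI conjI)
    fix x
    show "set_integrable M A (\<lambda>y. cinner (u y) x)"
      using rest_integrable[OF A(1) meas[of x]] intN[of x] by (simp add: N_def)
    show "cinner v x = (LINT y:A|M. cinner (u y) x)"
      using rest_integral[OF A(1) meas[of x]] v[of x] by (simp add: N_def \<phi>_def)
  qed
  have "weak_integral M A u = v"
    unfolding weak_integral_def
  proof (rule the_equality)
    show "has_weak_integral M A u v" by (rule hv)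
    fix v' assume "has_weak_integral M A u v'"
    then show "v' = v" by (rule weak_integral_unique[OF _ hv])
  qed
  then show ?thesis using hv by simp
qed




lemma integral_cs:
  fixes q :: "'a \<Rightarrow> real"
  assumes fin: "finite_measure N" and mq: "q \<in> borel_measurable N" and bq: "\<And>x. \<bar>q x\<bar> \<le> B"
  shows "(integral\<^sup>L N q)^2 \<le> measure N (space N) * integral\<^sup>L N (\<lambda>x. (q x)^2)"
proof -
  define m where "m = measure N (space N)"
  define c where "c = integral\<^sup>L N q"
  have iq: "integrable N q" using fm_integrable[OF fin mq, of B] bq by simp
  have iq2: "integrable N (\<lambda>x. (q x)^2)"
  proof (rule fm_integrable[OF fin, where B="B^2"])
    show "(\<lambda>x. (q x)^2) \<in> borel_measurable N" using mq by measurable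
    show "norm ((q x)^2) \<le> B^2" for x
    proof -
      have "\<bar>q x\<bar>^2 \<le> B^2" using bq[of x] by (intro power_mono) auto
      then show ?thesis by simp
    qed
  qed
  have ic: "integrable N (\<lambda>x. a)" for a :: real
    using fin by (simp add: finite_measure.integrable_const)
  have m0: "0 \<le> m" by (simp add: m_def)
  show ?thesis
  proof (cases "m = 0")
    case True
    have "norm c \<le> B * m" unfolding c_def m_def by (rule fm_bound[OF fin mq]) (use bq in simp)
    then have "c = 0" using True by simp
    then show ?thesis using True by (simp add: c_def m_def)
  next
    case False
    then have mp: "m > 0" using m0 by simp
    define a where "a = c / m"
    have "0 \<le> integral\<^sup>L N (\<lambda>x. (q x - a)^2)" by (rule Bochner_Integration.integral_nonneg) auto
    also have "(\<lambda>x. (q x - a)^2) = (\<lambda>x. ((q x)^2 - (2 * a) * q x) + a^2)"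
      by (simp add: power2_eq_square algebra_simps)
    also have "integral\<^sup>L N \<dots> = integral\<^sup>L N (\<lambda>x. (q x)^2) - (2 * a) * c + m * a^2"
      using iq iq2 ic by (simp add: c_def m_def)
    also have "\<dots> = integral\<^sup>L N (\<lambda>x. (q x)^2) - c^2 / m"
      using mp by (simp add: a_def power2_eq_square field_simps)
    finally have "c^2 / m \<le> integral\<^sup>L N (\<lambda>x. (q x)^2)" by simp
    then have "c^2 \<le> m * integral\<^sup>L N (\<lambda>x. (q x)^2)" using mp by (simp add: divide_le_eq mult.commute)
    then show ?thesis by (simp add: c_def m_def)
  qed
qed

lemma wi_norm_le:
  fixes u :: "'a \<Rightarrow> 'h::complex_inner"
  assumes hv: "has_weak_integral M A u v" and A: "A \<in> sets M" "emeasure M A < \<infinity>"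
    and mq: "q \<in> borel_measurable M" and uq: "\<And>y. norm (u y) \<le> q y" and qB: "\<And>y. q y \<le> B"
    and mv: "(\<lambda>y. cinner (u y) v) \<in> borel_measurable M"
  shows "norm v \<le> integral\<^sup>L (rest M A) q"
proof -
  define N where "N = rest M A"
  have fin: "finite_measure N" unfolding N_def using A by (rule rest_finite)
  have mvN: "(\<lambda>y. cinner (u y) v) \<in> borel_measurable N"
    using mv unfolding N_def by (simp add: measurable_cong_sets[OF rest_sets refl])
  have mqN: "q \<in> borel_measurable N"
    using mq unfolding N_def by (simp add: measurable_cong_sets[OF rest_sets refl])
  have q0: "0 \<le> q y" for y using uq[of y] norm_ge_zero order_trans by blast
  have bd: "norm (cinner (u y) v) \<le> q y * norm v" for y
    using cauchy_schwarz_c[of "u y" v] uq[of y]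
    by (meson mult_right_mono norm_ge_zero order_trans)
  have i1: "integrable N (\<lambda>y. norm (cinner (u y) v))"
  proof (rule fm_integrable[OF fin, where B="B * norm v"])
    show "(\<lambda>y. norm (cinner (u y) v)) \<in> borel_measurable N" using mvN by measurable
    show "norm (norm (cinner (u y) v)) \<le> B * norm v" for y
      using order_trans[OF bd[of y] mult_right_mono[OF qB[of y] norm_ge_zero]] by simp
  qed
  have i2: "integrable N (\<lambda>y. q y * norm v)"
    by (rule fm_integrable[OF fin, where B="B * norm v"]) (use mqN q0 qB in \<open>auto intro: mult_right_mono\<close>)
  have "(norm v)^2 = Re (cinner v v)" by (simp add: Re_cinner_self)
  also have "cinner v v = (LINT y:A|M. cinner (u y) v)" using hv by (simp add: has_weak_integral_def)
  also have "\<dots> = integral\<^sup>L N (\<lambda>y. cinner (u y) v)" unfolding N_def by (rule rest_integral[OF A(1) mv])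
  also have "Re \<dots> \<le> norm \<dots>" by (rule complex_Re_le_cmod)
  also have "\<dots> \<le> integral\<^sup>L N (\<lambda>y. norm (cinner (u y) v))" by (rule integral_norm_bound)
  also have "\<dots> \<le> integral\<^sup>L N (\<lambda>y. q y * norm v)" using i1 i2 bd by (intro integral_mono) auto
  also have "\<dots> = norm v * integral\<^sup>L N q" by (simp add: mult.commute)
  finally have le: "norm v * norm v \<le> norm v * integral\<^sup>L N q" by (simp add: power2_eq_square)
  show ?thesis
  proof (cases "norm v = 0")
    case True
    have "0 \<le> integral\<^sup>L N q" by (rule Bochner_Integration.integral_nonneg) (simp add: q0)
    then show ?thesis using True by (simp add: N_def)
  next
    case False
    then have "norm v > 0" by simp
    then show ?thesis using le by (simp add: N_def)
  qed
qed




lemma comp_cinner1: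
  fixes f :: "'g::topological_space \<Rightarrow> 'h::complex_inner" and T :: "'z::topological_space \<Rightarrow> 'g"
  assumes "(\<lambda>g. cinner (f g) x) \<in> borel_measurable borel" "continuous_on UNIV T"
  shows "(\<lambda>z. cinner (f (T z)) x) \<in> borel_measurable borel"
  using measurable_compose[OF borel_measurable_continuous_onI[OF assms(2)] assms(1)] by simp

lemma comp_cinner2:
  fixes f :: "'g::second_countable_topology \<Rightarrow> 'h::complex_inner" and T1 T2 :: "'z::topological_space \<Rightarrow> 'g"
  assumes "(\<lambda>(g, h). cinner (f g) (f h)) \<in> borel_measurable borel" "continuous_on UNIV T1" "continuous_on UNIV T2"
  shows "(\<lambda>z. cinner (f (T1 z)) (f (T2 z))) \<in> borel_measurable borel"
  using measurable_compose[OF borel_measurable_continuous_onI[OF continuous_on_Pair[OF assms(2,3)]] assms(1)]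
  by simp

theorem proposition2p4:
  fixes \<mu> :: "'g::{topological_ab_group_add, t2_space, second_countable_topology} measure"
    and f :: "'g \<Rightarrow> 'h::{complex_inner, complete_space}"
    and \<Lambda>1 \<Lambda>2 :: "'g set"
  assumes "locally_compact_type TYPE('g)"
    and "haar_measure \<mu>"
    and "bounded (range f)"
    and "\<And>x. (\<lambda>g. cinner (f g) x) \<in> borel_measurable borel"
    and "(\<lambda>(g, h). cinner (f g) (f h)) \<in> borel_measurable borel"
    and "\<Lambda>1 \<in> sets borel" and "\<Lambda>2 \<in> sets borel"
    and "emeasure \<mu> \<Lambda>1 < \<infinity>" and "emeasure \<mu> \<Lambda>2 < \<infinity>"
  shows "(\<forall>g. weak_integrable \<mu> \<Lambda>1 (\<lambda>h. f (g + h)))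
    \<and> weak_integrable \<mu> \<Lambda>2 (\<lambda>g. weak_integral \<mu> \<Lambda>1 (\<lambda>h. f (g + h)))
    \<and> (\<forall>h1 h2. set_integrable \<mu> \<Lambda>2 (\<lambda>g. cinner (f (g + h1)) (f (g + h2))))
    \<and> (\<forall>h2. set_integrable \<mu> \<Lambda>1
           (\<lambda>h1. LINT g:\<Lambda>2|\<mu>. cinner (f (g + h1)) (f (g + h2))))
    \<and> set_integrable \<mu> \<Lambda>1
           (\<lambda>h2. LINT h1:\<Lambda>1|\<mu>. LINT g:\<Lambda>2|\<mu>. cinner (f (g + h1)) (f (g + h2)))
    \<and> complex_of_real
        ((norm (weak_integral \<mu> \<Lambda>2 (\<lambda>g. weak_integral \<mu> \<Lambda>1 (\<lambda>h. f (g + h))))) ^ 2)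
      \<le> complex_of_real (measure \<mu> \<Lambda>2) *
        (LINT h2:\<Lambda>1|\<mu>. LINT h1:\<Lambda>1|\<mu>. LINT g:\<Lambda>2|\<mu>. cinner (f (g + h1)) (f (g + h2)))"
proof -
  note m1 = assms(4) and m2 = assms(5)
  have s\<mu>: "sets \<mu> = sets borel" using assms(2) by (simp add: haar_measure_def)
  have L1: "\<Lambda>1 \<in> sets \<mu>" "emeasure \<mu> \<Lambda>1 < \<infinity>" using assms(6,8) s\<mu> by auto
  have L2: "\<Lambda>2 \<in> sets \<mu>" "emeasure \<mu> \<Lambda>2 < \<infinity>" using assms(7,9) s\<mu> by auto
  have m\<mu>: "borel_measurable \<mu> = borel_measurable borel" by (rule measurable_cong_sets[OF s\<mu> refl])
  obtain B where fB: "\<And>y. norm (f y) \<le> B" using assms(3) unfolding bounded_iff by auto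
  have B0: "0 \<le> B" using fB[of undefined] norm_ge_zero order_trans by blast
  define BB where "BB = B * B"
  have BB0: "0 \<le> BB" using B0 by (simp add: BB_def)
  have \<Phi>b: "norm (cinner (f a) (f b)) \<le> BB" for a b
    using cauchy_schwarz_c[of "f a" "f b"] fB[of a] fB[of b] B0 unfolding BB_def
    by (meson mult_mono norm_ge_zero order_trans)
  define N1 where "N1 = rest \<mu> \<Lambda>1"
  define N2 where "N2 = rest \<mu> \<Lambda>2"
  have fin1: "finite_measure N1" unfolding N1_def using L1 by (rule rest_finite)
  have fin2: "finite_measure N2" unfolding N2_def using L2 by (rule rest_finite)
  have sN1: "sets N1 = sets borel" unfolding N1_def using s\<mu> by simp
  have sN2: "sets N2 = sets borel" unfolding N2_def using s\<mu> by simp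
  have mN1: "borel_measurable N1 = borel_measurable borel" by (rule measurable_cong_sets[OF sN1 refl])
  have mN2: "borel_measurable N2 = borel_measurable borel" by (rule measurable_cong_sets[OF sN2 refl])
  define ms1 where "ms1 = measure \<mu> \<Lambda>1"
  define ms2 where "ms2 = measure \<mu> \<Lambda>2"
  have ms1N: "measure N1 (space N1) = ms1" unfolding N1_def ms1_def by (rule rest_measure[OF L1(1)])
  have ms2N: "measure N2 (space N2) = ms2" unfolding N2_def ms2_def by (rule rest_measure[OF L2(1)])
  have ms10: "0 \<le> ms1" "0 \<le> ms2" by (simp_all add: ms1_def ms2_def)

  define w where "w g = weak_integral \<mu> \<Lambda>1 (\<lambda>h. f (g + h))" for g
  have mtr: "(\<lambda>h. cinner (f (g + h)) x) \<in> borel_measurable borel" for g x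
    by (rule comp_cinner1[OF m1]) (intro continuous_intros)
  have hw: "has_weak_integral \<mu> \<Lambda>1 (\<lambda>h. f (g + h)) (w g)" for g
    unfolding w_def by (rule weak_integral_exists[OF L1, where B=B]) (use mtr fB m\<mu> in auto)
  have wint: "cinner (w g) x = integral\<^sup>L N1 (\<lambda>h. cinner (f (g + h)) x)" for g x
    using hw[of g] rest_integral[OF L1(1) mtr[of g x, unfolded m\<mu>[symmetric]]]
    by (simp add: has_weak_integral_def N1_def)
  have wB: "norm (w g) \<le> B * ms1" for g
  proof -
    have "norm (w g) \<le> integral\<^sup>L (rest \<mu> \<Lambda>1) (\<lambda>y. B)"
      by (rule wi_norm_le[OF hw L1, where B=B]) (use fB mtr m\<mu> in auto)
    also have "\<dots> = B * ms1" using ms1N by (simp add: N1_def)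
    finally show ?thesis .
  qed
  have mw: "(\<lambda>g. cinner (w g) x) \<in> borel_measurable borel" for x
  proof -
    have "(\<lambda>g. integral\<^sup>L N1 (\<lambda>h. cinner (f (g + h)) x)) \<in> borel_measurable borel"
      by (rule meas_int[OF fin1 sN1]) (rule comp_cinner1[OF m1], intro continuous_intros)
    then show ?thesis by (simp add: wint)
  qed
  define v where "v = weak_integral \<mu> \<Lambda>2 w"
  have hv: "has_weak_integral \<mu> \<Lambda>2 w v"
    unfolding v_def by (rule weak_integral_exists[OF L2, where B="B * ms1"]) (use mw wB m\<mu> in auto)

  have mg: "(\<lambda>g. cinner (f (g + h1)) (f (g + h2))) \<in> borel_measurable borel" for h1 h2
    by (rule comp_cinner2[OF m2]) (intro continuous_intros)+
  define Ig where "Ig h1 h2 = integral\<^sup>L N2 (\<lambda>g. cinner (f (g + h1)) (f (g + h2)))" for h1 h2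
  have eqI: "(LINT g:\<Lambda>2|\<mu>. cinner (f (g + h1)) (f (g + h2))) = Ig h1 h2" for h1 h2
    unfolding Ig_def N2_def by (rule rest_integral[OF L2(1)]) (use mg m\<mu> in auto)
  have c3: "set_integrable \<mu> \<Lambda>2 (\<lambda>g. cinner (f (g + h1)) (f (g + h2)))" for h1 h2
    unfolding rest_integrable[OF L2(1) mg[unfolded m\<mu>[symmetric]]] N2_def[symmetric]
    by (rule fm_integrable[OF fin2, where B=BB]) (use mg mN2 \<Phi>b in auto)
  have IgB: "norm (Ig h1 h2) \<le> BB * ms2" for h1 h2
    unfolding Ig_def ms2N[symmetric] by (rule fm_bound[OF fin2]) (use mg mN2 \<Phi>b in auto)
  have mIg1: "(\<lambda>h1. Ig h1 h2) \<in> borel_measurable borel" for h2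
    unfolding Ig_def by (rule meas_int[OF fin2 sN2]) (rule comp_cinner2[OF m2], (intro continuous_intros)+)
  have mIgp: "(\<lambda>p. Ig (fst p) (snd p)) \<in> borel_measurable borel"
    unfolding Ig_def by (rule meas_int[OF fin2 sN2]) (rule comp_cinner2[OF m2], (intro continuous_intros)+)
  define J where "J h2 = integral\<^sup>L N1 (\<lambda>h1. Ig h1 h2)" for h2
  have eqJ: "(LINT h1:\<Lambda>1|\<mu>. Ig h1 h2) = J h2" for h2
    unfolding J_def N1_def by (rule rest_integral[OF L1(1)]) (use mIg1 m\<mu> in auto)
  have c4: "set_integrable \<mu> \<Lambda>1 (\<lambda>h1. Ig h1 h2)" for h2
    unfolding rest_integrable[OF L1(1) mIg1[unfolded m\<mu>[symmetric]]] N1_def[symmetric]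
    by (rule fm_integrable[OF fin1, where B="BB * ms2"]) (use mIg1 mN1 IgB in auto)
  have mJ: "J \<in> borel_measurable borel"
    unfolding J_def Ig_def by (rule meas_int[OF fin1 sN1], rule meas_int[OF fin2 sN2])
      (rule comp_cinner2[OF m2], (intro continuous_intros)+)
  have JB: "norm (J h2) \<le> BB * ms2 * ms1" for h2
    unfolding J_def ms1N[symmetric] by (rule fm_bound[OF fin1]) (use mIg1 mN1 IgB in auto)
  have c5: "set_integrable \<mu> \<Lambda>1 J"
    unfolding rest_integrable[OF L1(1) mJ[unfolded m\<mu>[symmetric]]] N1_def[symmetric]
    by (rule fm_integrable[OF fin1, where B="BB * ms2 * ms1"]) (use mJ mN1 JB in auto)
  have T: "(LINT h2:\<Lambda>1|\<mu>. LINT h1:\<Lambda>1|\<mu>. LINT g:\<Lambda>2|\<mu>. cinner (f (g + h1)) (f (g + h2)))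
      = integral\<^sup>L N1 J"
    unfolding eqI eqJ N1_def by (rule rest_integral[OF L1(1)]) (use mJ m\<mu> in auto)

  define L where "L g h1 = integral\<^sup>L N1 (\<lambda>h2. cinner (f (g + h1)) (f (g + h2)))" for g h1
  define K where "K g = integral\<^sup>L N1 (L g)" for g
  have mh2: "(\<lambda>h2. cinner (f (g + h1)) (f (g + h2))) \<in> borel_measurable borel" for g h1
    by (rule comp_cinner2[OF m2]) (intro continuous_intros)+
  have LB: "norm (L g h1) \<le> BB * ms1" for g h1
    unfolding L_def ms1N[symmetric] by (rule fm_bound[OF fin1]) (use mh2 mN1 \<Phi>b in auto)
  have Kw: "K g = complex_of_real ((norm (w g))^2)" for g
  proof -
    have "complex_of_real ((norm (w g))^2) = cinner (w g) (w g)" by (simp add: cinner_self)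
    also have "\<dots> = integral\<^sup>L N1 (\<lambda>h1. cinner (f (g + h1)) (w g))" by (rule wint)
    also have "\<dots> = integral\<^sup>L N1 (L g)"
    proof (rule Bochner_Integration.integral_cong[OF refl])
      fix h1
      have "cinner (f (g + h1)) (w g) = cnj (cinner (w g) (f (g + h1)))" by (rule cinner_commute)
      also have "\<dots> = cnj (integral\<^sup>L N1 (\<lambda>h2. cinner (f (g + h2)) (f (g + h1))))" by (simp add: wint)
      also have "\<dots> = integral\<^sup>L N1 (\<lambda>h2. cnj (cinner (f (g + h2)) (f (g + h1))))"
        by (rule Bochner_Integration.integral_cnj[symmetric])
      also have "\<dots> = L g h1" unfolding L_def by (simp add: cinner_commute[of "f (g + h1)"])
      finally show "cinner (f (g + h1)) (w g) = L g h1" .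
    qed
    finally show ?thesis by (simp add: K_def)
  qed
  have mLp: "(\<lambda>p. L (fst p) (snd p)) \<in> borel_measurable borel"
    unfolding L_def by (rule meas_int[OF fin1 sN1]) (rule comp_cinner2[OF m2], (intro continuous_intros)+)
  have mLs: "(\<lambda>p. L (snd p) (fst p)) \<in> borel_measurable borel"
    unfolding L_def by (rule meas_int[OF fin1 sN1]) (rule comp_cinner2[OF m2], (intro continuous_intros)+)
  have mK: "K \<in> borel_measurable borel"
    unfolding K_def by (rule meas_int[OF fin1 sN1]) (rule mLp)
  have FA: "integral\<^sup>L N2 K = (\<integral>h1. (\<integral>g. L g h1 \<partial>N2) \<partial>N1)"
    unfolding K_def by (rule fubini_bdd[OF fin1 sN1 fin2 sN2, where B="BB * ms1"]) (use mLs LB in auto)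
  have FB: "(\<integral>g. L g h1 \<partial>N2) = (\<integral>h2. Ig h1 h2 \<partial>N1)" for h1
    unfolding L_def Ig_def
    by (rule fubini_bdd[OF fin1 sN1 fin2 sN2, where B="BB"])
       (use \<Phi>b in \<open>auto intro!: comp_cinner2[OF m2] continuous_intros\<close>)
  have FC: "(\<integral>h1. (\<integral>h2. Ig h1 h2 \<partial>N1) \<partial>N1) = integral\<^sup>L N1 J"
    unfolding J_def by (rule fubini_bdd[OF fin1 sN1 fin1 sN1, where B="BB * ms2", symmetric]) (use mIgp IgB in auto)
  have KT: "integral\<^sup>L N2 K = integral\<^sup>L N1 J" using FA FB FC by simp

  have nwK: "norm (w g) = sqrt (Re (K g))" for g by (simp add: Kw)
  have mnw: "(\<lambda>g. norm (w g)) \<in> borel_measurable borel"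
    unfolding nwK using mK by measurable
  have vle: "norm v \<le> integral\<^sup>L N2 (\<lambda>g. norm (w g))"
    unfolding N2_def by (rule wi_norm_le[OF hv L2, where B="B * ms1"]) (use mnw m\<mu> wB mw in auto)
  have cs: "(integral\<^sup>L N2 (\<lambda>g. norm (w g)))^2 \<le> ms2 * integral\<^sup>L N2 (\<lambda>g. (norm (w g))^2)"
    unfolding ms2N[symmetric] by (rule integral_cs[OF fin2, where B="B * ms1"]) (use mnw mN2 wB in auto)
  have "(norm v)^2 \<le> (integral\<^sup>L N2 (\<lambda>g. norm (w g)))^2"
    using vle by (intro power_mono) auto
  also note cs
  finally have real_ineq: "(norm v)^2 \<le> ms2 * integral\<^sup>L N2 (\<lambda>g. (norm (w g))^2)" .
  have KI: "integral\<^sup>L N2 K = complex_of_real (integral\<^sup>L N2 (\<lambda>g. (norm (w g))^2))"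
    unfolding Kw by (rule integral_complex_of_real)
  have ineq: "complex_of_real ((norm v)^2) \<le> complex_of_real ms2 * integral\<^sup>L N1 J"
    unfolding KT[symmetric] KI using real_ineq by (simp add: less_eq_complex_def)

  show ?thesis
  proof (intro conjI allI)
    show "weak_integrable \<mu> \<Lambda>1 (\<lambda>h. f (g + h))" for g
      using hw[of g] by (auto simp: weak_integrable_def)
    show "weak_integrable \<mu> \<Lambda>2 (\<lambda>g. weak_integral \<mu> \<Lambda>1 (\<lambda>h. f (g + h)))"
      using hv by (auto simp: weak_integrable_def w_def[abs_def])
    show "set_integrable \<mu> \<Lambda>2 (\<lambda>g. cinner (f (g + h1)) (f (g + h2)))" for h1 h2 by (rule c3)
    show "set_integrable \<mu> \<Lambda>1 (\<lambda>h1. LINT g:\<Lambda>2|\<mu>. cinner (f (g + h1)) (f (g + h2)))" for h2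
      unfolding eqI by (rule c4)
    show "set_integrable \<mu> \<Lambda>1 (\<lambda>h2. LINT h1:\<Lambda>1|\<mu>. LINT g:\<Lambda>2|\<mu>. cinner (f (g + h1)) (f (g + h2)))"
      unfolding eqI eqJ by (rule c5)
    show "complex_of_real
        ((norm (weak_integral \<mu> \<Lambda>2 (\<lambda>g. weak_integral \<mu> \<Lambda>1 (\<lambda>h. f (g + h))))) ^ 2)
      \<le> complex_of_real (measure \<mu> \<Lambda>2) *
        (LINT h2:\<Lambda>1|\<mu>. LINT h1:\<Lambda>1|\<mu>. LINT g:\<Lambda>2|\<mu>. cinner (f (g + h1)) (f (g + h2)))"
      unfolding T using ineq by (simp add: v_def w_def[abs_def] ms2_def)
  qed
qed


end
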